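(* Let $t\ge1$ and let $q_1,q_2,\dots,q_{2t}$ be distinct primes with $q_i\equiv 3\pmod 4$ for all $i$. Then the field $L=\mathbb{Q}(\sqrt{q_1q_2},\sqrt{q_3q_4},\dots,\sqrt{q_{2t-1}q_{2t}})$ contains at least $t$ totally positive units that are independent modulo squares in $L$; i.e. the deficiency satisfies $\delta(L)\ge t$.
   Context: For a totally real field $F$ of degree $n$ and $0\neq\alpha\in F$, the signature of $\alpha$ is the vector in $\mathbb{F}_2^n$ whose entry at a real embedding $v$ is $0$ if $v(\alpha)>0$ and $1$ if $v(\alpha)<0$. The signatures of the units of $F$ form a subspace of $\mathbb{F}_2^n$ whose dimension is the unit signature rank of $F$; the deficiency $\delta(F)$ is $n$ minus the unit signature rank, which equals the $\mathbb{F}_2$-rank of the group of totally positive units of $F$ modulo squares of units. *)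

theory Defs
  imports Complex_Main "HOL-Computational_Algebra.Computational_Algebra"
begin

definition is_subfield :: "real set \<Rightarrow> bool" where
  "is_subfield K \<longleftrightarrow> 0 \<in> K \<and> 1 \<in> K \<and>
     (\<forall>x\<in>K. \<forall>y\<in>K. x + y \<in> K \<and> x * y \<in> K) \<and>
     (\<forall>x\<in>K. - x \<in> K) \<and> (\<forall>x\<in>K. x \<noteq> 0 \<longrightarrow> inverse x \<in> K)"

definition gen_field :: "real set \<Rightarrow> real set" where
  "gen_field A = \<Inter>{K. is_subfield K \<and> A \<subseteq> K}"

text \<open>A real embedding of K: a ring homomorphism K \<rightarrow> R (values outside K irrelevant).\<close>
definition real_embedding :: "real set \<Rightarrow> (real \<Rightarrow> real) \<Rightarrow> bool" where
  "real_embedding K \<sigma> \<longleftrightarrow> \<sigma> 1 = 1 \<and>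
     (\<forall>x\<in>K. \<forall>y\<in>K. \<sigma> (x + y) = \<sigma> x + \<sigma> y \<and> \<sigma> (x * y) = \<sigma> x * \<sigma> y)"

definition unit_of_field :: "real set \<Rightarrow> real \<Rightarrow> bool" where
  "unit_of_field K u \<longleftrightarrow> u \<in> K \<and> u \<noteq> 0 \<and> algebraic_int u \<and> algebraic_int (inverse u)"

definition totally_positive :: "real set \<Rightarrow> real \<Rightarrow> bool" where
  "totally_positive K x \<longleftrightarrow> (\<forall>\<sigma>. real_embedding K \<sigma> \<longrightarrow> \<sigma> x > 0)"

end

theory Submission
  imports Defs "HOL-Analysis.Analysis" "HOL-Number_Theory.Number_Theory"
begin


lemma sqrt_nat_rat:
  assumes "sqrt (real n) \<in> \<rat>"
  shows "\<exists>k. n = k^2"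
proof -
  obtain a b :: nat where b: "b \<noteq> 0" and ab: "\<bar>sqrt (real n)\<bar> = real a / real b" and cop: "coprime a b"
    using assms by (rule Rats_abs_nat_div_natE)
  have "real a = sqrt (real n) * real b" using ab b by simp
  then have "real (a^2) = real (n * b^2)" by (simp add: power_mult_distrib)
  then have eq: "a^2 = n * b^2" by (simp only: of_nat_eq_iff)
  have d: "b^2 dvd a^2" unfolding eq by (rule dvd_triv_right)
  have c: "coprime (a^2) (b^2)" using cop by simp
  have "is_unit (b^2)" by (rule coprime_common_divisor[OF c d dvd_refl])
  then have "b = 1" by simp
  with eq show ?thesis by auto
qed

lemma pell_combine:
  fixes h1 k1 h2 k2 N :: int and m :: nat
  assumes N: "N \<noteq> 0" and N1: "N = h1^2 - int m * k1^2" and N2: "N = h2^2 - int m * k2^2"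
    and mh: "h1 mod N = h2 mod N" and mk: "k1 mod N = k2 mod N"
  shows "\<exists>a b. a^2 - int m * b^2 = 1 \<and> h1*k2 - h2*k1 = N * b"
proof -
  obtain dh where dh: "h2 - h1 = N * dh" using mh by (metis dvdE mod_eq_dvd_iff)
  obtain dk where dk: "k2 - k1 = N * dk" using mk by (metis dvdE mod_eq_dvd_iff)
  define X where "X = h1*h2 - int m*k1*k2"
  define Y where "Y = h1*k2 - h2*k1"
  have h2: "h2 = h1 + N*dh" and k2: "k2 = k1 + N*dk" using dh dk by auto
  have "X = (h1^2 - int m * k1^2) + N*(h1*dh - int m*k1*dk)"
    unfolding X_def h2 k2 by (simp add: algebra_simps power2_eq_square)
  also have "\<dots> = N * (1 + h1*dh - int m * k1 * dk)" unfolding N1[symmetric] by (simp add: algebra_simps)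
  finally have "X = N * (1 + h1*dh - int m * k1 * dk)" .
  then obtain a where Xa: "X = N * a" by blast
  have "Y = N * (h1*dk - k1*dh)"
    unfolding Y_def h2 k2 by (simp add: algebra_simps)
  then obtain b where Yb: "Y = N * b" by blast
  have "X^2 - int m * Y^2 = (h1^2 - int m * k1^2) * (h2^2 - int m * k2^2)"
    unfolding X_def Y_def by (simp add: algebra_simps power2_eq_square)
  also have "\<dots> = N * N" using N1 N2 by simp
  finally have "N*N*(a^2 - int m * b^2) = N * N * 1"
    unfolding Xa Yb by (simp add: algebra_simps power2_eq_square)
  then have pe: "a^2 - int m * b^2 = 1" using N by simp
  show ?thesis by (rule exI[of _ a], rule exI[of _ b]) (use pe Yb Y_def in simp)
qed
lemma pell_exists:
  fixes m :: nat
  assumes nsq: "\<not> (\<exists>k. m = k^2)"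
  shows "\<exists>a b::nat. b > 0 \<and> a^2 = m * b^2 + 1"
proof -
  define \<theta> where "\<theta> = sqrt (real m)"
  have irr: "\<theta> \<notin> \<rat>" using sqrt_nat_rat nsq \<theta>_def by blast
  have th0: "\<theta> \<ge> 0" by (simp add: \<theta>_def)
  have thsq: "\<theta>^2 = real m" by (simp add: \<theta>_def)
  define A where "A = approx_set \<theta>"
  have infA: "infinite A" using irr rational_iff_finite_approx_set A_def by blast
  define f where "f = (\<lambda>(h::int,k::int). h^2 - int m * k^2)"
  define M where "M = \<lceil>1 + 2*\<theta>\<rceil>"
  have fbound: "\<bar>f x\<bar> \<le> M" if "x \<in> A" for x
  proof -
    obtain h k where x: "x = (h,k)" by (cases x)
    have k: "k > 0" and hk: "\<bar>\<theta> - of_int h / of_int k\<bar> < 1/(of_int k)^2"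
      using that x by (auto simp: A_def approx_set_def)
    have k1: "real_of_int k \<ge> 1" using k by simp
    have d: "\<bar>real_of_int h - k*\<theta>\<bar> < 1/k"
    proof -
      have "\<bar>real_of_int h - k*\<theta>\<bar> = k * \<bar>\<theta> - of_int h / of_int k\<bar>"
        using k by (simp add: field_simps abs_mult_pos' flip: abs_mult)
      also have "\<dots> < k * (1/(of_int k)^2)" by (rule mult_strict_left_mono[OF hk]) (use k in simp)
      also have "\<dots> = 1/k" by (simp add: power2_eq_square)
      finally show ?thesis .
    qed
    have sv: "\<bar>real_of_int h + k*\<theta>\<bar> \<le> 1/k + 2*k*\<theta>"
    proof -
      have kt: "k*\<theta> \<ge> 0" using k th0 by simp
      show ?thesis unfolding abs_le_iff using d kt unfolding abs_less_iff by (intro conjI) linarith+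
    qed
    have "real_of_int (f x) = (real_of_int h - k*\<theta>) * (real_of_int h + k*\<theta>)"
    proof -
      have "real_of_int (f x) = (real_of_int h)^2 - real m * (real_of_int k)^2" by (simp add: f_def x)
      also have "\<dots> = (real_of_int h)^2 - (k*\<theta>)^2" by (simp add: power_mult_distrib thsq)
      also have "\<dots> = (real_of_int h - k*\<theta>) * (real_of_int h + k*\<theta>)" by (simp add: power2_eq_square algebra_simps)
      finally show ?thesis .
    qed
    then have "\<bar>real_of_int (f x)\<bar> = \<bar>real_of_int h - k*\<theta>\<bar> * \<bar>real_of_int h + k*\<theta>\<bar>"
      by (simp add: abs_mult)
    also have "\<dots> \<le> (1/k) * (1/k + 2*k*\<theta>)"
      using d sv k by (intro mult_mono) auto
    also have "\<dots> = 1/k^2 + 2*\<theta>" using k by (simp add: field_simps power2_eq_square)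
    also have "\<dots> \<le> 1 + 2*\<theta>"
    proof -
      have "1/(real_of_int k)^2 \<le> 1" using k1 by (simp add: divide_le_eq one_le_power)
      then show ?thesis by simp
    qed
    finally have "\<bar>real_of_int (f x)\<bar> \<le> 1 + 2*\<theta>" .
    then show ?thesis unfolding M_def by linarith
  qed
  have fnz: "f x \<noteq> 0" if "x \<in> A" for x
  proof
    assume f0: "f x = 0"
    obtain h k where x: "x = (h,k)" by (cases x)
    have k: "k > 0" using that x by (auto simp: A_def approx_set_def)
    have "real_of_int (h^2) = real_of_int (int m * k^2)" using f0 by (simp add: f_def x)
    then have "(real_of_int \<bar>h\<bar>)^2 = (\<theta> * k)^2" by (simp add: power_mult_distrib thsq)
    then have "real_of_int \<bar>h\<bar> = \<theta> * k" using th0 k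
      by (subst (asm) power2_eq_iff_nonneg) auto
    then have "\<theta> = real_of_int \<bar>h\<bar> / real_of_int k" using k by (simp add: field_simps)
    then have "\<theta> \<in> \<rat>" by simp
    with irr show False by simp
  qed
  define g where "g = (\<lambda>(h::int,k::int). (f (h,k), h mod f (h,k), k mod f (h,k)))"
  have "g ` A \<subseteq> {-M..M} \<times> {-M..M} \<times> {-M..M}"
  proof
    fix y assume "y \<in> g ` A"
    then obtain h k where hk: "(h,k) \<in> A" and y: "y = g (h,k)" by auto
    have b1: "\<bar>f (h,k)\<bar> \<le> M" using fbound hk by blast
    have b2: "f (h,k) \<noteq> 0" using fnz hk by blast
    have zb: "\<bar>z mod f (h,k)\<bar> \<le> M" for z
    proof (cases "f (h,k) > 0")
      case True
      then show ?thesis using b1 pos_mod_bound[OF True, of z] pos_mod_sign[OF True, of z] by linarith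
    next
      case False
      then have "f (h,k) < 0" using b2 by linarith
      then show ?thesis using b1 neg_mod_bound[of "f (h,k)" z] neg_mod_sign[of "f (h,k)" z] by linarith
    qed
    have "y = (f (h,k), h mod f (h,k), k mod f (h,k))" using y by (simp add: g_def)
    then show "y \<in> {-M..M} \<times> {-M..M} \<times> {-M..M}" using b1 zb[of h] zb[of k]
      by (simp add: abs_le_iff)
  qed
  then have "finite (g ` A)" by (rule finite_subset) auto
  then obtain x0 where "x0 \<in> A" and inf: "infinite {x\<in>A. g x = g x0}"
    using pigeonhole_infinite infA by blast
  then obtain x1 x2 where x1: "x1 \<in> {x\<in>A. g x = g x0}" and x2: "x2 \<in> {x\<in>A. g x = g x0}" and ne: "x1 \<noteq> x2"
  proof -
    let ?B = "{x\<in>A. g x = g x0}"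
    obtain x1 where x1: "x1 \<in> ?B" using inf infinite_imp_nonempty by blast
    have "infinite (?B - {x1})" using inf by simp
    then obtain x2 where "x2 \<in> ?B - {x1}" using infinite_imp_nonempty by blast
    then show ?thesis using that x1 by blast
  qed
  obtain h1 k1 where e1: "x1 = (h1,k1)" by (cases x1)
  obtain h2 k2 where e2: "x2 = (h2,k2)" by (cases x2)
  define N where "N = f x1"
  have N: "N \<noteq> 0" using fnz x1 N_def by auto
  have gg: "g (h1,k1) = g (h2,k2)" using x1 x2 e1 e2 by auto
  then have fN: "f (h2,k2) = N" using N_def e1 by (auto simp: g_def)
  have fN1: "f (h1,k1) = N" using N_def e1 by simp
  have mh: "h1 mod N = h2 mod N" and mk: "k1 mod N = k2 mod N"
    using gg fN fN1 by (auto simp: g_def)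
  have N1: "N = h1^2 - int m * k1^2" using fN1 by (simp add: f_def)
  have N2: "N = h2^2 - int m * k2^2" using fN by (simp add: f_def)
  obtain a b where pe: "a^2 - int m * b^2 = 1" and Yb: "h1*k2 - h2*k1 = N * b"
    using pell_combine[OF N N1 N2 mh mk] by blast
  have "b \<noteq> 0"
  proof
    assume "b = 0"
    then have Y0: "h1*k2 = h2*k1" using Yb by simp
    have c1: "coprime h1 k1" "k1 > 0" using x1 e1 by (auto simp: A_def approx_set_def)
    have c2: "coprime h2 k2" "k2 > 0" using x2 e2 by (auto simp: A_def approx_set_def)
    have "k1 dvd h1 * k2" unfolding Y0 by (rule dvd_triv_right)
    then have "k1 dvd k2" using c1(1) by (simp add: coprime_dvd_mult_right_iff coprime_commute)
    have "k2 dvd h2 * k1" unfolding Y0[symmetric] by (rule dvd_triv_right)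
    then have "k2 dvd k1" using c2(1) by (simp add: coprime_dvd_mult_right_iff coprime_commute)
    have "k1 = k2" using \<open>k1 dvd k2\<close> \<open>k2 dvd k1\<close> c1 c2 by (simp add: zdvd_antisym_nonneg)
    then have "h1 = h2" using Y0 c1 by simp
    with \<open>k1 = k2\<close> ne e1 e2 show False by simp
  qed
  show ?thesis
  proof (intro exI conjI)
    show "nat \<bar>b\<bar> > 0" using \<open>b \<noteq> 0\<close> by simp
    have "int ((nat \<bar>a\<bar>)^2) = int (m * (nat \<bar>b\<bar>)^2 + 1)" using pe by simp
    then show "(nat \<bar>a\<bar>)^2 = m * (nat \<bar>b\<bar>)^2 + 1" by (simp only: of_nat_eq_iff)
  qed
qed



lemma no_sqrt_minus1:
  fixes p y :: nat
  assumes p: "prime p" and p4: "p mod 4 = 3" and d: "p dvd y^2 + 1"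
  shows False
proof -
  define k where "k = p div 4"
  have pk: "p = 4*k+3" using p4 k_def by (metis div_mult_mod_eq mult.commute)
  have ny: "\<not> p dvd y"
  proof
    assume "p dvd y"
    then have "p dvd y^2" using dvd_mult2[of p y y] by (simp add: power2_eq_square)
    then have "p dvd 1" using d by (metis dvd_add_right_iff)
    then show False using p by simp
  qed
  have f: "[y^(p-1) = 1] (mod p)" using fermat_theorem[OF p ny] .
  then have fi: "[int y^(p-1) = 1] (mod int p)" using cong_int_iff[of "y^(p-1)" 1 p] by simp
  have e: "p - 1 = 2*(2*k+1)" using pk by simp
  have c1: "[int y^2 = -1] (mod int p)"
  proof -
    have "int p dvd int (y^2 + 1)" using d by (simp only: int_dvd_int_iff)
    then show ?thesis by (simp add: cong_iff_dvd_diff add.commute)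
  qed
  then have "[(int y^2)^(2*k+1) = (-1)^(2*k+1)] (mod int p)" by (rule cong_pow)
  moreover have "(int y^2)^(2*k+1) = int y^(p-1)" unfolding e power_mult ..
  ultimately have "[int y^(p-1) = -1] (mod int p)" by simp
  then have "[1 = -1] (mod int p)" using fi by (meson cong_sym cong_trans)
  then have "int p dvd 2" by (simp add: cong_iff_dvd_diff)
  then have "p dvd 2" by (metis int_dvd_int_iff of_nat_numeral)
  then have "p \<le> 2" by (simp add: dvd_imp_le)
  then show False using pk by simp
qed

lemma sq_of_coprime_prod:
  fixes a b c :: nat
  assumes "coprime a b" "a * b = c^2" "c > 0"
  shows "\<exists>x. a = x^2" "\<exists>y. b = y^2"
proof -
  have pos: "a > 0" "b > 0" using assms(2,3) by (auto intro!: Nat.gr0I)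
  have "is_nth_power 2 (a*b)" using assms(2) by (auto simp: is_nth_power_def)
  then show "\<exists>x. a = x^2" "\<exists>y. b = y^2"
    using is_nth_power_mult_coprime_natD[OF assms(1) _ pos] by (auto simp: is_nth_power_def)
qed

lemma sq_mod4: "(x::nat)^2 mod 4 = (if even x then 0 else 1)"
proof (cases "even x")
  case True
  then obtain k where "x = 2*k" by blast
  then show ?thesis by (simp add: power2_eq_square)
next
  case False
  then obtain k where k: "x = 2*k+1" using oddE by blast
  have "x^2 = 4*(k*k+k) + 1" unfolding k by (simp add: power2_eq_square algebra_simps)
  then show ?thesis using False by simp
qed

lemma descent:
  fixes p q :: nat
  assumes p: "prime p" and q: "prime q" and pq: "p \<noteq> q" and p4: "p mod 4 = 3" and q4: "q mod 4 = 3"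
  shows "b > 0 \<Longrightarrow> a^2 = p*q*b^2 + 1 \<Longrightarrow> \<exists>x y::nat. p*x^2 = q*y^2 + 1 \<or> q*x^2 = p*y^2 + 1"
proof (induction b arbitrary: a rule: less_induct)
  case (less b)
  define m where "m = p*q"
  have m4: "m mod 4 = 1" using p4 q4 unfolding m_def by (simp add: mod_mult_eq[symmetric])
  have eq: "a^2 = m*b^2 + 1" using less.prems m_def by simp
  have mb4: "(m*b^2) mod 4 = b^2 mod 4"
    by (metis m4 mod_mult_eq mod_mod_trivial mult_1)
  have r: "(a^2) mod 4 = (b^2 mod 4 + 1) mod 4" unfolding eq by (metis mb4 mod_add_left_eq)
  have beven: "even b"
  proof (rule ccontr)
    assume ob: "odd b"
    then have "b^2 mod 4 = 1" by (simp add: sq_mod4)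
    then have "(a^2) mod 4 = 2" using r by simp
    then show False by (simp add: sq_mod4 split: if_splits)
  qed
  have aodd: "odd a"
  proof
    assume "even a"
    then have "(a^2) mod 4 = 0" by (simp add: sq_mod4)
    moreover have "b^2 mod 4 = 0" using beven by (simp add: sq_mod4)
    ultimately show False using r by simp
  qed
  define \<beta> where "\<beta> = a div 2"
  define c where "c = b div 2"
  have a\<beta>: "a = 2*\<beta>+1" using aodd \<beta>_def by simp
  have bc: "b = 2*c" using beven c_def by simp
  have c0: "c > 0" using less.prems(1) bc by simp
  have "4*(\<beta>*(\<beta>+1)) + 1 = a^2" unfolding a\<beta> by (simp add: power2_eq_square algebra_simps)
  also have "\<dots> = 4*(m*c^2) + 1" unfolding eq bc by (simp add: power2_eq_square algebra_simps)
  finally have prod: "(\<beta>+1)*\<beta> = m*c^2" by simp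
  have cop: "coprime (\<beta>+1) \<beta>" by simp
  have pd: "p dvd (\<beta>+1) \<or> p dvd \<beta>"
  proof -
    have "p dvd (\<beta>+1)*\<beta>" unfolding prod m_def by simp
    then show ?thesis using p prime_dvd_mult_iff by blast
  qed
  have qd: "q dvd (\<beta>+1) \<or> q dvd \<beta>"
  proof -
    have "q dvd (\<beta>+1)*\<beta>" unfolding prod m_def by simp
    then show ?thesis using q prime_dvd_mult_iff by blast
  qed
  have cpq: "coprime p q" using primes_coprime[OF p q pq] .
  have p0: "p > 0" "q > 0" using p q by (auto simp: prime_gt_0_nat)
  show ?case
  proof (cases "p dvd (\<beta>+1)")
    case pa: True
    show ?thesis
    proof (cases "q dvd \<beta>")
      case qb: True
      obtain u where u: "\<beta>+1 = p*u" using pa by blast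
      obtain v where v: "\<beta> = q* v" using qb by blast
      have e: "(\<beta>+1)*\<beta> = (p*u)*(q* v)" by (simp only: u[symmetric] v[symmetric])
      have "m*(u* v) = (p*u)*(q* v)" unfolding m_def by (simp add: ac_simps)
      also have "\<dots> = m*c^2" using e prod by simp
      finally have "m*(u* v) = m*c^2" .
      then have uv: "u* v = c^2" using p0 by (simp add: m_def)
      have "coprime (p*u) (q* v)" using cop by (simp only: u[symmetric] v[symmetric])
      then have "coprime u v" by simp
      then obtain x y where "u = x^2" "v = y^2" using sq_of_coprime_prod[OF _ uv c0] by blast
      then have "p*x^2 = q*y^2 + 1" using u v by simp
      then show ?thesis by blast
    next
      case False
      then have qa: "q dvd \<beta>+1" using qd by simp
      have "p*q dvd \<beta>+1" using pa qa cpq by (simp add: divides_mult)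
      then obtain u where u: "\<beta>+1 = m*u" unfolding m_def by blast
      have e: "(\<beta>+1)*\<beta> = (m*u)*\<beta>" by (simp only: u[symmetric])
      have "m*(u*\<beta>) = (m*u)*\<beta>" by (simp add: ac_simps)
      also have "\<dots> = m*c^2" using e prod by simp
      finally have "m*(u*\<beta>) = m*c^2" .
      then have uv: "u*\<beta> = c^2" using p0 by (simp add: m_def)
      have "coprime (m*u) \<beta>" using cop by (simp only: u[symmetric])
      then have "coprime u \<beta>" by simp
      then obtain x y where "u = x^2" "\<beta> = y^2" using sq_of_coprime_prod[OF _ uv c0] by blast
      then have "p dvd y^2 + 1" using u m_def by simp
      then show ?thesis using no_sqrt_minus1[OF p p4] by blast
    qed
  next
    case False
    then have pb: "p dvd \<beta>" using pd by simp
    show ?thesis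
    proof (cases "q dvd \<beta>+1")
      case qa: True
      obtain u where u: "\<beta>+1 = q*u" using qa by blast
      obtain v where v: "\<beta> = p* v" using pb by blast
      have e: "(\<beta>+1)*\<beta> = (q*u)*(p* v)" by (simp only: u[symmetric] v[symmetric])
      have "m*(u* v) = (q*u)*(p* v)" unfolding m_def by (simp add: ac_simps)
      also have "\<dots> = m*c^2" using e prod by simp
      finally have "m*(u* v) = m*c^2" .
      then have uv: "u* v = c^2" using p0 by (simp add: m_def)
      have "coprime (q*u) (p* v)" using cop by (simp only: u[symmetric] v[symmetric])
      then have "coprime u v" by simp
      then obtain x y where "u = x^2" "v = y^2" using sq_of_coprime_prod[OF _ uv c0] by blast
      then have "q*x^2 = p*y^2 + 1" using u v by simp
      then show ?thesis by blast
    next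
      case False
      then have qb: "q dvd \<beta>" using qd by simp
      have "p*q dvd \<beta>" using pb qb cpq by (simp add: divides_mult)
      then obtain v where v: "\<beta> = m* v" unfolding m_def by blast
      have e: "(\<beta>+1)*\<beta> = (\<beta>+1)*(m* v)" by (simp only: v[symmetric])
      have "m*((\<beta>+1)* v) = (\<beta>+1)*(m* v)" by (simp add: ac_simps)
      also have "\<dots> = m*c^2" using e prod by simp
      finally have "m*((\<beta>+1)* v) = m*c^2" .
      then have uv: "(\<beta>+1)* v = c^2" using p0 by (simp add: m_def)
      have "coprime (\<beta>+1) (m* v)" using cop by (simp only: v[symmetric])
      then have "coprime (\<beta>+1) v" by simp
      then obtain x y where xy: "\<beta>+1 = x^2" "v = y^2" using sq_of_coprime_prod[OF _ uv c0] by blast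
      have pell: "x^2 = p*q*y^2 + 1" using xy v m_def by simp
      have "(x*y)^2 = x^2 * y^2" by (simp add: power_mult_distrib)
      also have "\<dots> = (\<beta>+1)* v" by (simp only: xy)
      also have "\<dots> = c^2" by (rule uv)
      finally have "(x*y)^2 = c^2" .
      then have cxy: "x*y = c" by (simp add: power2_eq_iff_nonneg)
      then have y0: "y > 0" using c0 by (auto intro!: Nat.gr0I)
      have "x > 0" using cxy c0 by (auto intro!: Nat.gr0I)
      then have "y \<le> x*y" by simp
      then have "y \<le> c" using cxy by simp
      then have "y < b" using bc c0 by simp
      then show ?thesis using less.IH[OF _ y0 pell] by blast
    qed
  qed
qed

lemma pq_solution:
  fixes p q :: nat
  assumes p: "prime p" and q: "prime q" and pq: "p \<noteq> q" and p4: "p mod 4 = 3" and q4: "q mod 4 = 3"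
    and pell: "\<And>m::nat. \<not> (\<exists>k. m = k^2) \<Longrightarrow> \<exists>a b::nat. b > 0 \<and> a^2 = m * b^2 + 1"
  shows "\<exists>x y::nat. p*x^2 = q*y^2 + 1 \<or> q*x^2 = p*y^2 + 1"
proof -
  have "\<not> (\<exists>k. p*q = k^2)"
  proof
    assume "\<exists>k. p*q = k^2"
    then obtain k where k: "p*q = k^2" by blast
    have "p dvd k^2" unfolding k[symmetric] by simp
    then have "p dvd k" using p prime_dvd_power by blast
    then have "p^2 dvd k^2" by (simp add: dvd_power_same)
    then have "p*p dvd p*q" unfolding k by (simp add: power2_eq_square)
    then have "p dvd q" using p by (simp add: prime_gt_0_nat)
    then show False using primes_dvd_imp_eq[OF p q] pq by blast
  qed
  then obtain a b :: nat where "b > 0" "a^2 = p*q*b^2 + 1" using pell by blast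
  then show ?thesis using descent[OF p q pq p4 q4] by blast
qed





lemma sf_0: "is_subfield K \<Longrightarrow> 0 \<in> K" and sf_1: "is_subfield K \<Longrightarrow> 1 \<in> K"
  by (auto simp: is_subfield_def)
lemma sf_add: "is_subfield K \<Longrightarrow> x \<in> K \<Longrightarrow> y \<in> K \<Longrightarrow> x + y \<in> K"
  by (auto simp: is_subfield_def)
lemma sf_mult: "is_subfield K \<Longrightarrow> x \<in> K \<Longrightarrow> y \<in> K \<Longrightarrow> x * y \<in> K"
  by (auto simp: is_subfield_def)
lemma sf_neg: "is_subfield K \<Longrightarrow> x \<in> K \<Longrightarrow> - x \<in> K"
  by (auto simp: is_subfield_def)
lemma sf_inv: "is_subfield K \<Longrightarrow> x \<in> K \<Longrightarrow> inverse x \<in> K"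
  by (cases "x = 0") (auto simp: is_subfield_def)
lemma sf_diff: "is_subfield K \<Longrightarrow> x \<in> K \<Longrightarrow> y \<in> K \<Longrightarrow> x - y \<in> K"
  using sf_add[of K x "-y"] sf_neg[of K y] by simp
lemma sf_divide: "is_subfield K \<Longrightarrow> x \<in> K \<Longrightarrow> y \<in> K \<Longrightarrow> x / y \<in> K"
  using sf_mult[of K x "inverse y"] sf_inv[of K y] by (simp add: divide_inverse)
lemma sf_power: "is_subfield K \<Longrightarrow> x \<in> K \<Longrightarrow> x ^ n \<in> K"
  by (induction n) (auto intro: sf_1 sf_mult)
lemma sf_sum: "is_subfield K \<Longrightarrow> (\<And>i. i \<in> A \<Longrightarrow> f i \<in> K) \<Longrightarrow> sum f A \<in> K"
  by (induction A rule: infinite_finite_induct) (auto intro: sf_0 sf_add)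
lemma sf_prod: "is_subfield K \<Longrightarrow> (\<And>i. i \<in> A \<Longrightarrow> f i \<in> K) \<Longrightarrow> prod f A \<in> K"
  by (induction A rule: infinite_finite_induct) (auto intro: sf_1 sf_mult)
lemma sf_of_nat: "is_subfield K \<Longrightarrow> of_nat n \<in> K"
  by (induction n) (auto intro: sf_0 sf_1 sf_add)
lemma sf_of_int: "is_subfield K \<Longrightarrow> of_int n \<in> K"
proof (cases "n \<ge> 0")
  case True
  assume K: "is_subfield K"
  then show ?thesis using True sf_of_nat[OF K, of "nat n"] by simp
next
  case False
  assume K: "is_subfield K"
  then show ?thesis using False sf_neg[OF K sf_of_nat[OF K, of "nat (-n)"]] by simp
qed
lemma sf_Rats: "is_subfield K \<Longrightarrow> x \<in> \<rat> \<Longrightarrow> x \<in> K"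
  by (auto elim!: Rats_cases' intro!: sf_divide sf_of_int)

lemma Rats_subfield: "is_subfield \<rat>"
  by (auto simp: is_subfield_def)

lemma gen_field_least: "is_subfield K \<Longrightarrow> A \<subseteq> K \<Longrightarrow> gen_field A \<subseteq> K"
  unfolding gen_field_def by blast
lemma gen_field_sub: "A \<subseteq> gen_field A"
  unfolding gen_field_def by blast
lemma gen_field_subfield: "is_subfield (gen_field A)"
  unfolding gen_field_def is_subfield_def by blast



definition qext :: "real set \<Rightarrow> real \<Rightarrow> real set" where
  "qext K sv = {x. \<exists>a\<in>K. \<exists>b\<in>K. x = a + b* sv}"

lemma qext_sub: "is_subfield K \<Longrightarrow> K \<subseteq> qext K sv"
proof
  fix x assume K: "is_subfield K" and x: "x \<in> K"
  show "x \<in> qext K sv" unfolding qext_def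
    by (intro CollectI bexI[of _ x] bexI[of _ 0]) (simp_all add: x sf_0[OF K])
qed
lemma qext_gen:
  assumes K: "is_subfield K"
  shows "sv \<in> qext K sv"
  unfolding qext_def
  by (intro CollectI bexI[of _ 0] bexI[of _ 1]) (simp_all add: sf_0[OF K] sf_1[OF K])

lemma qext_subfield:
  assumes K: "is_subfield K" and s2: "sv^2 \<in> K"
  shows "is_subfield (qext K sv)"
proof (cases "sv \<in> K")
  case True
  have "qext K sv = K"
  proof
    show "qext K sv \<subseteq> K" unfolding qext_def using K True by (auto intro: sf_add sf_mult)
  qed (rule qext_sub[OF K])
  then show ?thesis using K by simp
next
  case sK: False
  have ss: "sv* sv \<in> K" using s2 by (simp add: power2_eq_square)
  have c01: "0 \<in> qext K sv" "1 \<in> qext K sv" using qext_sub[OF K] sf_0[OF K] sf_1[OF K] by auto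
  have cam: "x + y \<in> qext K sv \<and> x * y \<in> qext K sv" if "x \<in> qext K sv" "y \<in> qext K sv" for x y
  proof -
    from that obtain a b c d where x: "x = a + b* sv" and y: "y = c + d* sv" and abcd: "a \<in> K" "b \<in> K" "c \<in> K" "d \<in> K"
      unfolding qext_def by blast
    have "x + y = (a + c) + (b + d)* sv" unfolding x y by (simp add: algebra_simps)
    moreover have "a + c \<in> K" "b + d \<in> K" using abcd K by (auto intro: sf_add)
    ultimately have 1: "x + y \<in> qext K sv" unfolding qext_def by blast
    have "x * y = (a*c + b*d*(sv* sv)) + (a*d + b*c)* sv" unfolding x y by (simp add: algebra_simps)
    moreover have "a*c + b*d*(sv* sv) \<in> K" "a*d + b*c \<in> K" using abcd K ss by (auto intro: sf_add sf_mult)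
    ultimately have 2: "x * y \<in> qext K sv" unfolding qext_def by blast
    show ?thesis using 1 2 by blast
  qed
  have cneg: "-x \<in> qext K sv" if "x \<in> qext K sv" for x
  proof -
    from that obtain a b where x: "x = a + b* sv" and ab: "a \<in> K" "b \<in> K"
      unfolding qext_def by blast
    have "-x = (-a) + (-b)* sv" unfolding x by simp
    then show "-x \<in> qext K sv" unfolding qext_def using ab K by (blast intro: sf_neg)
  qed
  have cinv: "inverse x \<in> qext K sv" if "x \<in> qext K sv" "x \<noteq> 0" for x
  proof -
    from that obtain a b where x: "x = a + b* sv" and ab: "a \<in> K" "b \<in> K" and x0: "a + b* sv \<noteq> 0"
      unfolding qext_def by blast
    define n where "n = a*a - b*b*(sv* sv)"
    have nK: "n \<in> K" unfolding n_def using ab ss K by (auto intro: sf_mult sf_diff)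
    have n0: "n \<noteq> 0"
    proof
      assume n0: "n = 0"
      show False
      proof (cases "b = 0")
        case True
        then show False using n0 x0 by (simp add: n_def)
      next
        case False
        have "(a/b)^2 = sv^2" using n0 False by (simp add: n_def field_simps power2_eq_square)
        then have "sv = a/b \<or> sv = -(a/b)" by (metis power2_eq_iff)
        moreover have "a/b \<in> K" by (rule sf_divide[OF K ab])
        ultimately show False using sK sf_neg[OF K] by auto
      qed
    qed
    have "inverse x = (a/n) + (-(b/n))* sv"
    proof -
      have e1: "(a/n) + (-(b/n))* sv = (a - b* sv)/n" by (simp add: diff_divide_distrib)
      have e2: "(a + b* sv)*(a - b* sv) = n" unfolding n_def by (simp add: algebra_simps)
      have "(a + b* sv) * ((a/n) + (-(b/n))* sv) = ((a + b* sv)*(a - b* sv))/n" unfolding e1 by simp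
      also have "\<dots> = 1" unfolding e2 using n0 by simp
      finally have "(a + b* sv) * ((a/n) + (-(b/n))* sv) = 1" .
      then show ?thesis unfolding x by (metis inverse_unique)
    qed
    moreover have "a/n \<in> K" "-(b/n) \<in> K" using ab nK K by (auto intro: sf_divide sf_neg)
    ultimately show "inverse x \<in> qext K sv" unfolding qext_def by blast
  qed
  show ?thesis unfolding is_subfield_def using c01 cam cneg cinv by blast
qed

lemma qext_sqrt_split:
  assumes K: "is_subfield K" and s2: "sv^2 \<in> K" and z2: "z^2 \<in> K" and z: "z \<in> qext K sv"
  shows "z \<in> K \<or> z * sv \<in> K"
proof -
  obtain a b where zab: "z = a + b* sv" and ab: "a \<in> K" "b \<in> K" using z unfolding qext_def by blast
  show ?thesis
  proof (cases "sv \<in> K")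
    case True
    then show ?thesis using zab ab K by (auto intro: sf_add sf_mult)
  next
    case sK: False
    have "a * b = 0"
    proof (rule ccontr)
      assume ab0: "a * b \<noteq> 0"
      have "z^2 = (a^2 + b^2* sv^2) + (2*a*b)* sv" unfolding zab by (simp add: power2_eq_square algebra_simps)
      then have "sv = (z^2 - (a^2 + b^2* sv^2)) / (2*a*b)" using ab0 by (simp add: field_simps)
      moreover have "(z^2 - (a^2 + b^2* sv^2)) / (2*a*b) \<in> K"
      proof -
        have a2: "a^2 \<in> K" "b^2 \<in> K" using ab by (auto intro: sf_power[OF K])
        have two: "2 \<in> K" using sf_of_nat[OF K, of 2] by simp
        show ?thesis
          by (rule sf_divide[OF K sf_diff[OF K z2 sf_add[OF K a2(1) sf_mult[OF K a2(2) s2]]]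
                sf_mult[OF K sf_mult[OF K two ab(1)] ab(2)]])
      qed
      ultimately show False using sK by simp
    qed
    then have "a = 0 \<or> b = 0" by simp
    then show ?thesis
    proof
      assume "a = 0"
      then have "z * sv = b * sv^2" using zab by (simp add: power2_eq_square)
      then show ?thesis using K ab s2 by (simp add: sf_mult)
    next
      assume "b = 0"
      then show ?thesis using zab ab by simp
    qed
  qed
qed



primrec tower :: "(nat \<Rightarrow> real) \<Rightarrow> nat \<Rightarrow> real set" where
  "tower r 0 = \<rat>"
| "tower r (Suc k) = qext (tower r k) (r k)"

lemma tower_subfield:
  assumes "\<And>j. (r j)^2 \<in> \<rat>"
  shows "is_subfield (tower r k) \<and> \<rat> \<subseteq> tower r k"
proof (induction k)
  case 0
  then show ?case using Rats_subfield by simp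
next
  case (Suc k)
  have K: "is_subfield (tower r k)" and Q: "\<rat> \<subseteq> tower r k" using Suc by auto
  have "(r k)^2 \<in> tower r k" using assms Q by blast
  then have "is_subfield (qext (tower r k) (r k))" using qext_subfield[OF K] by blast
  moreover have "\<rat> \<subseteq> qext (tower r k) (r k)" using Q qext_sub[OF K, of "r k"] by blast
  ultimately show ?case by simp
qed

lemma tower_mono:
  assumes r2: "\<And>j. (r j)^2 \<in> \<rat>"
  shows "tower r k \<subseteq> tower r (k + j)"
proof (induction j)
  case 0
  then show ?case by simp
next
  case (Suc j)
  have K: "is_subfield (tower r (k + j))" using tower_subfield[OF r2, where k="k+j"] by (rule conjunct1)
  have "tower r (k+j) \<subseteq> tower r (Suc (k+j))" using qext_sub[OF K] by simp
  then show ?case using Suc.IH by auto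
qed

lemma tower_gen:
  assumes r2: "\<And>j. (r j)^2 \<in> \<rat>" and ik: "i < k"
  shows "r i \<in> tower r k"
proof -
  have K: "is_subfield (tower r i)" using tower_subfield[OF r2, where k=i] by (rule conjunct1)
  have "r i \<in> qext (tower r i) (r i)" by (rule qext_gen[OF K])
  then have "r i \<in> tower r (Suc i)" by simp
  moreover have "tower r (Suc i) \<subseteq> tower r (Suc i + (k - Suc i))" by (rule tower_mono[OF r2])
  moreover have "Suc i + (k - Suc i) = k" using ik by simp
  ultimately show ?thesis by auto
qed

lemma tower_sqrt:
  assumes r2: "\<And>j. (r j)^2 \<in> \<rat>"
  shows "z^2 \<in> \<rat> \<Longrightarrow> z \<in> tower r k \<Longrightarrow> \<exists>T \<subseteq> {..<k}. z * (\<Prod>j\<in>T. r j) \<in> \<rat>"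
proof (induction k arbitrary: z)
  case 0
  then show ?case by (intro exI[of _ "{}"]) simp
next
  case (Suc k)
  have K: "is_subfield (tower r k)" and QK: "\<rat> \<subseteq> tower r k"
    using tower_subfield[OF r2, where k=k] by auto
  have s2: "(r k)^2 \<in> tower r k" using r2[of k] QK by blast
  have z2: "z^2 \<in> tower r k" using Suc.prems(1) QK by blast
  have zq: "z \<in> qext (tower r k) (r k)" using Suc.prems(2) by simp
  have "z \<in> tower r k \<or> z * r k \<in> tower r k"
    by (rule qext_sqrt_split[OF K s2 z2 zq])
  then show ?case
  proof
    assume "z \<in> tower r k"
    then obtain T where "T \<subseteq> {..<k}" "z * (\<Prod>j\<in>T. r j) \<in> \<rat>" using Suc.IH[OF Suc.prems(1)] by blast
    then show ?thesis by (intro exI[of _ T]) auto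
  next
    assume zr: "z * r k \<in> tower r k"
    have "(z * r k)^2 = z^2 * (r k)^2" by (simp add: power_mult_distrib)
    then have "(z * r k)^2 \<in> \<rat>" using Suc.prems(1) r2[of k] by simp
    then obtain T where T: "T \<subseteq> {..<k}" "z * r k * (\<Prod>j\<in>T. r j) \<in> \<rat>" using Suc.IH zr by blast
    have kT: "k \<notin> T" using T by auto
    have fT: "finite T" using T(1) finite_subset by blast
    have "z * (\<Prod>j\<in>insert k T. r j) = z * r k * (\<Prod>j\<in>T. r j)"
      using fT kT by (simp add: mult.assoc)
    moreover have "insert k T \<subseteq> {..<Suc k}" using T by auto
    ultimately show ?thesis using T by metis
  qed
qed


lemma emb_rat:
  assumes K: "is_subfield K" and \<sigma>: "real_embedding K \<sigma>" and x: "x \<in> \<rat>"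
  shows "\<sigma> x = x"
proof -
  have add: "\<And>x y. x \<in> K \<Longrightarrow> y \<in> K \<Longrightarrow> \<sigma> (x + y) = \<sigma> x + \<sigma> y"
   and mul: "\<And>x y. x \<in> K \<Longrightarrow> y \<in> K \<Longrightarrow> \<sigma> (x * y) = \<sigma> x * \<sigma> y"
   and one: "\<sigma> 1 = 1" using \<sigma> by (auto simp: real_embedding_def)
  have zero: "\<sigma> 0 = 0" using add[of 0 0] sf_0[OF K] by simp
  have nat: "\<sigma> (of_nat n) = of_nat n" for n
  proof (induction n)
    case (Suc n)
    then show ?case using add[of "of_nat n" 1] sf_of_nat[OF K] sf_1[OF K] one by (simp add: add.commute)
  qed (simp add: zero)
  have neg: "\<sigma> (- y) = - \<sigma> y" if "y \<in> K" for y
    using add[of y "-y"] that sf_neg[OF K that] zero by simp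
  have int: "\<sigma> (of_int n) = of_int n" for n
  proof (cases "n \<ge> 0")
    case True
    then show ?thesis using nat[of "nat n"] by simp
  next
    case False
    then have "of_int n = - (of_nat (nat (-n)) :: real)" by simp
    then show ?thesis using neg[OF sf_of_nat[OF K, of "nat (-n)"]] nat[of "nat (-n)"] False by simp
  qed
  obtain a b where ab: "x = of_int a / of_int b" and b: "b \<noteq> 0" using x by (auto elim!: Rats_cases')
  have "\<sigma> (of_int a) = \<sigma> (x * of_int b)" using ab b by simp
  also have "\<dots> = \<sigma> x * of_int b" using mul[of x "of_int b"] sf_Rats[OF K x] sf_of_int[OF K] int by simp
  finally have "of_int a = \<sigma> x * of_int b" using int by simp
  moreover have "x * of_int b = of_int a" using ab b by simp
  ultimately have "\<sigma> x * of_int b = x * of_int b" by linarith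
  then show ?thesis using b by (metis mult_cancel_right of_int_eq_0_iff)
qed

lemma alg_int_quad:
  fixes x :: real
  assumes "x^2 - of_int n * x + 1 = 0"
  shows "algebraic_int x"
proof (rule algebraic_int.intros[of "[:1, - of_int n, 1:]"])
  show "lead_coeff [:1, - of_int n, 1:] = (1::real)" by simp
  show "\<forall>i. Polynomial.coeff [:1, - of_int n, 1:] i \<in> (\<int>::real set)"
  proof
    fix i show "Polynomial.coeff [:1, - of_int n, 1:] i \<in> (\<int>::real set)"
      by (auto simp: coeff_pCons split: nat.splits)
  qed
  show "poly [:1, - of_int n, 1:] x = 0" using assms by (simp add: algebra_simps power2_eq_square)
qed





lemma unit_pos:
  fixes L :: "real set" and pa pb X Y :: nat
  assumes L: "is_subfield L" and rL: "sqrt (real (pa*pb)) \<in> L" and eq: "pa*X^2 = pb*Y^2 + 1"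
  defines "w \<equiv> real X * sqrt (real pa) + real Y * sqrt (real pb)"
  shows "unit_of_field L (w^2) \<and> totally_positive L (w^2)"
proof -
  define a where "a = sqrt (real pa)"
  define b where "b = sqrt (real pb)"
  define sv where "sv = sqrt (real (pa*pb))"
  define wb where "wb = real X * a - real Y * b"
  have w: "w = real X * a + real Y * b" by (simp add: w_def a_def b_def)
  have a2: "a^2 = real pa" and b2: "b^2 = real pb" by (simp_all add: a_def b_def)
  have abs: "a * b = sv" by (simp add: a_def b_def sv_def real_sqrt_mult)
  have eqr: "real pa * (real X)^2 = real pb * (real Y)^2 + 1"
    using arg_cong[OF eq, of real] by simp
  have wwb: "w * wb = 1"
  proof -
    have "w * wb = (real X)^2 * a^2 - (real Y)^2 * b^2" unfolding w wb_def by (simp add: power2_eq_square algebra_simps)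
    also have "\<dots> = 1" unfolding a2 b2 using eqr by (simp add: algebra_simps)
    finally show ?thesis .
  qed
  have w0: "w \<noteq> 0" and wb0: "wb \<noteq> 0" using wwb by auto
  define A where "A = (real X)^2 * real pa + (real Y)^2 * real pb"
  define B where "B = 2 * real X * real Y"
  have wsq: "w^2 = A + B * sv"
  proof -
    have "w^2 = (real X)^2 * a^2 + (real Y)^2 * b^2 + 2 * real X * real Y * (a * b)"
      unfolding w by (simp add: power2_eq_square algebra_simps)
    then show ?thesis unfolding A_def B_def a2 b2 abs .
  qed
  have wbsq: "wb^2 = A - B * sv"
  proof -
    have "wb^2 = (real X)^2 * a^2 + (real Y)^2 * b^2 - 2 * real X * real Y * (a * b)"
      unfolding wb_def by (simp add: power2_eq_square algebra_simps)
    then show ?thesis unfolding A_def B_def a2 b2 abs .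
  qed
  have prod1: "w^2 * wb^2 = 1" using wwb by (metis power_mult_distrib power_one)
  have AK: "A \<in> L" unfolding A_def using L
    by (metis of_nat_mult of_nat_power of_nat_add sf_of_nat)
  have BK: "B \<in> L" unfolding B_def using L
    by (metis of_nat_mult of_nat_numeral sf_of_nat)
  have sK: "sv \<in> L" using rL sv_def by simp
  have uL: "w^2 \<in> L" unfolding wsq using L AK BK sK by (intro sf_add sf_mult)
  define n where "n = 2 * (X^2 * pa + Y^2 * pb)"
  have nA: "real_of_int (int n) = 2 * A" unfolding n_def A_def by simp
  have sum: "w^2 + wb^2 = 2 * A" unfolding wsq wbsq by simp
  have q1: "(w^2)^2 - of_int (int n) * w^2 + 1 = 0"
  proof -
    have "of_int (int n) * w^2 = (w^2 + wb^2) * w^2" unfolding nA sum ..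
    then show ?thesis using prod1 by (simp add: algebra_simps power2_eq_square)
  qed
  have inv: "inverse (w^2) = wb^2" using prod1 by (metis inverse_unique)
  have q2: "(wb^2)^2 - of_int (int n) * wb^2 + 1 = 0"
  proof -
    have "of_int (int n) * wb^2 = (w^2 + wb^2) * wb^2" unfolding nA sum ..
    then show ?thesis using prod1 by (simp add: algebra_simps power2_eq_square)
  qed
  have unit: "unit_of_field L (w^2)"
    unfolding unit_of_field_def inv using uL w0 alg_int_quad[OF q1] alg_int_quad[OF q2] by simp
  have tp: "totally_positive L (w^2)"
    unfolding totally_positive_def
  proof (intro allI impI)
    fix \<sigma> assume \<sigma>: "real_embedding L \<sigma>"
    have add: "\<And>x y. x \<in> L \<Longrightarrow> y \<in> L \<Longrightarrow> \<sigma> (x + y) = \<sigma> x + \<sigma> y"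
     and mul: "\<And>x y. x \<in> L \<Longrightarrow> y \<in> L \<Longrightarrow> \<sigma> (x * y) = \<sigma> x * \<sigma> y"
      using \<sigma> by (auto simp: real_embedding_def)
    have QA: "A \<in> \<rat>" "B \<in> \<rat>" unfolding A_def B_def by simp_all
    have sA: "\<sigma> A = A" "\<sigma> B = B" using emb_rat[OF L \<sigma>] QA by auto
    have ss: "sv * sv = real (pa*pb)" unfolding sv_def by simp
    have "\<sigma> (sv * sv) = sv * sv" unfolding ss by (rule emb_rat[OF L \<sigma>]) simp
    then have "\<sigma> sv * \<sigma> sv = sv * sv" using mul[OF sK sK] by simp
    then have "(\<sigma> sv)^2 = sv^2" by (simp add: power2_eq_square)
    then have sig: "\<sigma> sv = sv \<or> \<sigma> sv = - sv" by (simp add: power2_eq_iff)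
    have "\<sigma> (w^2) = A + B * \<sigma> sv"
      unfolding wsq using add[OF AK sf_mult[OF L BK sK]] mul[OF BK sK] sA by simp
    then have "\<sigma> (w^2) = w^2 \<or> \<sigma> (w^2) = wb^2" using sig unfolding wsq wbsq by auto
    then show "\<sigma> (w^2) > 0" using w0 wb0 by auto
  qed
  show ?thesis using unit tp by blast
qed

lemma sqrt_prod: "sqrt (prod f A) = (\<Prod>x\<in>A. sqrt (f x))"
  by (induction A rule: infinite_finite_induct) (simp_all add: real_sqrt_mult)



theorem theorem6p11:
  fixes t :: nat and q :: "nat \<Rightarrow> nat"
  assumes "t \<ge> 1"
    and "inj_on q {..<2*t}"
    and "\<And>i. i < 2*t \<Longrightarrow> prime (q i)"
    and "\<And>i. i < 2*t \<Longrightarrow> q i mod 4 = 3"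
  defines "L \<equiv> gen_field {sqrt (real (q (2*i) * q (2*i+1))) | i. i < t}"
  shows "\<exists>u :: nat \<Rightarrow> real.
           (\<forall>i<t. unit_of_field L (u i) \<and> totally_positive L (u i)) \<and>
           (\<forall>S. S \<subseteq> {..<t} \<and> S \<noteq> {} \<longrightarrow> \<not> (\<exists>y\<in>L. (\<Prod>i\<in>S. u i) = y ^ 2))"
proof -
  note inj = assms(2) and primes = assms(3) and mod4 = assms(4)
  define r where "r = (\<lambda>i::nat. sqrt (real (q (2*i) * q (2*i+1))))"
  have r2: "\<And>j. (r j)^2 \<in> \<rat>" unfolding r_def by simp
  have Lr: "L = gen_field (r ` {..<t})" unfolding L_def r_def
    by (rule arg_cong[where f=gen_field]) auto
  have LK: "is_subfield L" unfolding Lr by (rule gen_field_subfield)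
  have rL: "r i \<in> L" if "i < t" for i unfolding Lr
    by (rule subsetD[OF gen_field_sub]) (use that in simp)
  have Ltow: "L \<subseteq> tower r t" unfolding Lr
  proof (rule gen_field_least)
    show "is_subfield (tower r t)" using tower_subfield[OF r2, where k=t] by (rule conjunct1)
    show "r ` {..<t} \<subseteq> tower r t"
    proof
      fix x assume "x \<in> r ` {..<t}"
      then obtain i where i: "i < t" and x: "x = r i" by blast
      show "x \<in> tower r t" unfolding x by (rule tower_gen[OF r2 i])
    qed
  qed
  have ex: "\<forall>i. \<exists>z::bool\<times>nat\<times>nat. i < t \<longrightarrow>
     q (2*i + (if fst z then 1 else 0)) * (fst (snd z))^2 = q (2*i + (if fst z then 0 else 1)) * (snd (snd z))^2 + 1"
  proof
    fix i
    show "\<exists>z::bool\<times>nat\<times>nat. i < t \<longrightarrow>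
     q (2*i + (if fst z then 1 else 0)) * (fst (snd z))^2 = q (2*i + (if fst z then 0 else 1)) * (snd (snd z))^2 + 1"
    proof (cases "i < t")
      case False
      then show ?thesis by simp
    next
      case True
      have i2: "2*i < 2*t" "2*i+1 < 2*t" using True by auto
      have ne: "q (2*i) \<noteq> q (2*i+1)"
      proof
        assume "q (2*i) = q (2*i+1)"
        then have "2*i = 2*i+1" using inj_onD[OF inj] i2 by blast
        then show False by simp
      qed
      obtain x y where "q (2*i) * x^2 = q (2*i+1) * y^2 + 1 \<or> q (2*i+1) * x^2 = q (2*i) * y^2 + 1"
        using pq_solution[OF primes[OF i2(1)] primes[OF i2(2)] ne mod4[OF i2(1)] mod4[OF i2(2)] pell_exists]
        by blast
      then show ?thesis
      proof
        assume "q (2*i) * x^2 = q (2*i+1) * y^2 + 1"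
        then show ?thesis by (intro exI[of _ "(False, x, y)"]) simp
      next
        assume "q (2*i+1) * x^2 = q (2*i) * y^2 + 1"
        then show ?thesis by (intro exI[of _ "(True, x, y)"]) simp
      qed
    qed
  qed
  obtain F where F: "\<forall>i. i < t \<longrightarrow>
     q (2*i + (if fst (F i) then 1 else 0)) * (fst (snd (F i)))^2 = q (2*i + (if fst (F i) then 0 else 1)) * (snd (snd (F i)))^2 + 1"
    using choice[OF ex] ..
  define fl where "fl i = fst (F i)" for i
  define X where "X i = fst (snd (F i))" for i
  define Y where "Y i = snd (snd (F i))" for i
  define ja where "ja i = 2*i + (if fl i then 1 else 0)" for i
  define jb where "jb i = 2*i + (if fl i then 0 else 1)" for i
  have eqX: "q (ja i) * (X i)^2 = q (jb i) * (Y i)^2 + 1" if "i < t" for i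
    using F that unfolding ja_def jb_def fl_def X_def Y_def by blast
  have jab: "ja i < 2*t" "jb i < 2*t" "ja i div 2 = i" "jb i div 2 = i" "ja i \<noteq> jb i" if "i < t" for i
    using that by (auto simp: ja_def jb_def)
  have qq: "q (ja i) * q (jb i) = q (2*i) * q (2*i+1)" for i
    by (auto simp: ja_def jb_def)
  define w where "w i = real (X i) * sqrt (real (q (ja i))) + real (Y i) * sqrt (real (q (jb i)))" for i
  define wb where "wb i = real (X i) * sqrt (real (q (ja i))) - real (Y i) * sqrt (real (q (jb i)))" for i
  define u where "u i = (w i)^2" for i
  have unitpos: "unit_of_field L (u i) \<and> totally_positive L (u i)" if "i < t" for i
  proof -
    have "sqrt (real (q (ja i) * q (jb i))) \<in> L" using rL[OF that] unfolding qq r_def by simp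
    from unit_pos[OF LK this eqX[OF that]] show ?thesis unfolding u_def w_def .
  qed
  have X0: "X i > 0" if "i < t" for i
  proof (rule ccontr)
    assume "\<not> X i > 0"
    then show False using eqX[OF that] by simp
  qed
  have qpos: "q j > 0" if "j < 2*t" for j using primes[OF that] by (simp add: prime_gt_0_nat)
  have wwb: "w i * wb i = 1" if "i < t" for i
  proof -
    have "w i * wb i = (real (X i))^2 * real (q (ja i)) - (real (Y i))^2 * real (q (jb i))"
      unfolding w_def wb_def by (simp add: power2_eq_square algebra_simps)
    also have "\<dots> = 1" using arg_cong[OF eqX[OF that], of real] by (simp add: algebra_simps)
    finally show ?thesis .
  qed
  have wpos: "w i > 0" if "i < t" for i
  proof -
    have "real (X i) * sqrt (real (q (ja i))) > 0" using X0[OF that] qpos[OF jab(1)[OF that]] by simp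
    moreover have "real (Y i) * sqrt (real (q (jb i))) \<ge> 0" by simp
    ultimately show ?thesis unfolding w_def by linarith
  qed
  have uL: "u i \<in> L" if "i < t" for i using unitpos[OF that] by (simp add: unit_of_field_def)
  have sumw: "wb i + w i = 2 * real (X i) * sqrt (real (q (ja i)))" for i
    by (simp add: w_def wb_def)
  show ?thesis
  proof (intro exI[of _ u] conjI allI impI)
    fix i assume "i < t"
    then show "unit_of_field L (u i)" "totally_positive L (u i)" using unitpos by auto
  next
    fix S assume S: "S \<subseteq> {..<t} \<and> S \<noteq> {}"
    show "\<not> (\<exists>y\<in>L. (\<Prod>i\<in>S. u i) = y^2)"
    proof
      assume "\<exists>y\<in>L. (\<Prod>i\<in>S. u i) = y^2"
      then obtain y where yL: "y \<in> L" and yeq: "(\<Prod>i\<in>S. u i) = y^2" by blast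
      have St: "\<And>i. i \<in> S \<Longrightarrow> i < t" using S by auto
      have fS: "finite S" using S finite_subset by blast
      define W where "W = (\<Prod>i\<in>S. w i)"
      have Wpos: "W > 0" unfolding W_def using wpos St by (intro prod_pos) auto
      have W2: "W^2 = (\<Prod>i\<in>S. u i)" unfolding W_def u_def by (simp add: prod_power_distrib)
      have "W = y \<or> W = -y" using W2 yeq by (simp add: power2_eq_iff)
      then have WL: "W \<in> L" using yL sf_neg[OF LK yL] by auto
      define V where "V D = (\<Prod>i\<in>D. wb i) * (\<Prod>i\<in>S-D. w i)" for D
      have VL: "V D \<in> L" if "D \<in> Pow S" for D
      proof -
        have DS: "D \<subseteq> S" using that by auto
        have WS: "W = (\<Prod>i\<in>S-D. w i) * (\<Prod>i\<in>D. w i)" unfolding W_def using prod.subset_diff[OF DS fS] .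
        have "V D * W = (\<Prod>i\<in>D. wb i * w i) * (\<Prod>i\<in>S-D. w i * w i)"
          unfolding V_def WS prod.distrib by (simp add: ac_simps)
        also have "(\<Prod>i\<in>D. wb i * w i) = 1" using wwb DS St by (intro prod.neutral) (auto simp: mult.commute)
        also have "(\<Prod>i\<in>S-D. w i * w i) = (\<Prod>i\<in>S-D. u i)" unfolding u_def by (simp add: power2_eq_square)
        finally have "V D * W = (\<Prod>i\<in>S-D. u i)" by simp
        then have "V D = (\<Prod>i\<in>S-D. u i) / W" using Wpos by (simp add: field_simps)
        moreover have "(\<Prod>i\<in>S-D. u i) \<in> L" using uL St by (intro sf_prod[OF LK]) auto
        ultimately show ?thesis using sf_divide[OF LK _ WL] by simp
      qed
      define Z where "Z = (\<Prod>i\<in>S. 2 * real (X i) * sqrt (real (q (ja i))))"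
      have "Z = (\<Prod>i\<in>S. wb i + w i)" unfolding Z_def sumw ..
      also have "\<dots> = (\<Sum>D\<in>Pow S. V D)" unfolding V_def by (rule prod_add[OF fS])
      finally have ZV: "Z = (\<Sum>D\<in>Pow S. V D)" .
      have ZL: "Z \<in> L" unfolding ZV by (rule sf_sum[OF LK VL])
      have Z2: "Z^2 \<in> \<rat>"
      proof -
        have "Z^2 = (\<Prod>i\<in>S. 4 * (real (X i))^2 * real (q (ja i)))"
          unfolding Z_def prod_power_distrib by (intro prod.cong refl) (simp add: power_mult_distrib)
        also have "\<dots> \<in> \<rat>" by (rule sf_prod[OF Rats_subfield]) simp
        finally show ?thesis .
      qed
      have "\<exists>T \<subseteq> {..<t}. Z * (\<Prod>j\<in>T. r j) \<in> \<rat>"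
        by (rule tower_sqrt[OF r2 Z2 subsetD[OF Ltow ZL]])
      then obtain T where T: "T \<subseteq> {..<t}" "Z * (\<Prod>j\<in>T. r j) \<in> \<rat>" by blast
      define N1 where "N1 = (\<Prod>i\<in>S. q (ja i))"
      define N2 where "N2 = (\<Prod>j\<in>T. q (2*j) * q (2*j+1))"
      define C where "C = (\<Prod>i\<in>S. 2 * real (X i))"
      have ZC: "Z * (\<Prod>j\<in>T. r j) = C * sqrt (real (N1 * N2))"
      proof -
        have "Z = C * (\<Prod>i\<in>S. sqrt (real (q (ja i))))" unfolding Z_def C_def prod.distrib[symmetric] ..
        also have "(\<Prod>i\<in>S. sqrt (real (q (ja i)))) = sqrt (real N1)" unfolding N1_def sqrt_prod of_nat_prod ..
        finally have "Z = C * sqrt (real N1)" .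
        moreover have "(\<Prod>j\<in>T. r j) = sqrt (real N2)" unfolding N2_def r_def sqrt_prod of_nat_prod ..
        ultimately show ?thesis by (simp add: real_sqrt_mult)
      qed
      have "C > 0" unfolding C_def by (rule prod_pos) (use X0 St in simp)
      then have C0: "C \<noteq> 0" by simp
      have CQ: "C \<in> \<rat>" unfolding C_def by (rule sf_prod[OF Rats_subfield]) simp
      have "sqrt (real (N1 * N2)) = (Z * (\<Prod>j\<in>T. r j)) / C" unfolding ZC using C0 by simp
      also have "\<dots> \<in> \<rat>" using T(2) CQ by (rule Rats_divide)
      finally obtain k where k: "N1 * N2 = k^2" using sqrt_nat_rat by blast
      obtain i0 where i0: "i0 \<in> S" using S by blast
      have i0t: "i0 < t" using St[OF i0] .
      define j0 where "j0 = (if i0 \<in> T then jb i0 else ja i0)"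
      have j0: "j0 < 2*t" "j0 div 2 = i0" using jab[OF i0t] by (auto simp: j0_def)
      have pj0: "prime (q j0)" using primes[OF j0(1)] .
      have mq: "multiplicity (q j0) (q j) = (if j = j0 then 1 else 0)" if "j < 2*t" for j
      proof (cases "j = j0")
        case True
        then show ?thesis using pj0 by simp
      next
        case False
        then have "q j \<noteq> q j0" using inj that j0(1) by (auto simp: inj_on_def)
        then show ?thesis using False prime_multiplicity_other[OF pj0 primes[OF that]] by simp
      qed
      have fT: "finite T" using T(1) finite_subset by blast
      have nz1: "q (ja i) \<noteq> 0" if "i \<in> S" for i using qpos[OF jab(1)[OF St[OF that]]] by simp
      have nz2: "q (2*j) * q (2*j+1) \<noteq> 0" if "j \<in> T" for j
      proof -
        have jt: "2*j < 2*t" "2*j+1 < 2*t" using that T by auto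
        show ?thesis using qpos[OF jt(1)] qpos[OF jt(2)] by simp
      qed
      have N10: "N1 \<noteq> 0" unfolding N1_def prod_zero_iff[OF fS] using nz1 by blast
      have N20: "N2 \<noteq> 0" unfolding N2_def prod_zero_iff[OF fT] using nz2 by blast
      have m1: "multiplicity (q j0) N1 = (if i0 \<in> T then 0 else 1)"
      proof -
        have "multiplicity (q j0) N1 = (\<Sum>i\<in>S. multiplicity (q j0) (q (ja i)))"
          unfolding N1_def
        proof (rule prime_elem_multiplicity_prod_distrib)
          show "prime_elem (q j0)" using pj0 by simp
          show "finite S" by (rule fS)
          show "0 \<notin> (\<lambda>i. q (ja i)) ` S"
          proof
            assume "0 \<in> (\<lambda>i. q (ja i)) ` S"
            then obtain i where "i \<in> S" "0 = q (ja i)" by blast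
            then show False using nz1 by metis
          qed
        qed
        also have "\<dots> = (\<Sum>i\<in>S. if i = i0 then (if i0 \<in> T then 0 else 1) else 0)"
        proof (rule sum.cong[OF refl])
          fix i assume iS: "i \<in> S"
          have "multiplicity (q j0) (q (ja i)) = (if ja i = j0 then 1 else 0)" using mq[OF jab(1)[OF St[OF iS]]] .
          moreover have "(ja i = j0) = (i = i0 \<and> i0 \<notin> T)"
          proof
            assume h: "ja i = j0"
            then have ii: "i = i0" using jab(3)[OF St[OF iS]] j0(2) by simp
            moreover have "i0 \<notin> T"
            proof
              assume "i0 \<in> T"
              then have "j0 = jb i0" by (simp add: j0_def)
              then show False using h ii jab(5)[OF i0t] by simp
            qed
            ultimately show "i = i0 \<and> i0 \<notin> T" by simp
          next
            assume "i = i0 \<and> i0 \<notin> T"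
            then show "ja i = j0" by (simp add: j0_def)
          qed
          ultimately show "multiplicity (q j0) (q (ja i)) = (if i = i0 then (if i0 \<in> T then 0 else 1) else 0)"
            by auto
        qed
        also have "\<dots> = (if i0 \<in> T then 0 else 1)" using i0 fS by (simp add: sum.delta)
        finally show ?thesis .
      qed
      have m2: "multiplicity (q j0) N2 = (if i0 \<in> T then 1 else 0)"
      proof -
        have "multiplicity (q j0) N2 = (\<Sum>j\<in>T. multiplicity (q j0) (q (2*j) * q (2*j+1)))"
          unfolding N2_def
        proof (rule prime_elem_multiplicity_prod_distrib)
          show "prime_elem (q j0)" using pj0 by simp
          show "finite T" by (rule fT)
          show "0 \<notin> (\<lambda>j. q (2*j) * q (2*j+1)) ` T"
          proof
            assume "0 \<in> (\<lambda>j. q (2*j) * q (2*j+1)) ` T"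
            then obtain j where "j \<in> T" "0 = q (2*j) * q (2*j+1)" by blast
            then show False using nz2 by metis
          qed
        qed
        also have "\<dots> = (\<Sum>j\<in>T. if j = i0 then 1 else 0)"
        proof (rule sum.cong[OF refl])
          fix j assume jT: "j \<in> T"
          have jt: "2*j < 2*t" "2*j+1 < 2*t" using jT T by auto
          have "multiplicity (q j0) (q (2*j) * q (2*j+1)) = multiplicity (q j0) (q (2*j)) + multiplicity (q j0) (q (2*j+1))"
            using pj0 qpos[OF jt(1)] qpos[OF jt(2)] by (intro prime_elem_multiplicity_mult_distrib) auto
          also have "\<dots> = (if 2*j = j0 then 1 else 0) + (if 2*j+1 = j0 then 1 else 0)"
            using mq[OF jt(1)] mq[OF jt(2)] by simp
          also have "\<dots> = (if j = i0 then 1 else 0)"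
          proof -
            have "j0 = 2*i0 \<or> j0 = 2*i0+1" using j0(2) by presburger
            then show ?thesis by auto
          qed
          finally show "multiplicity (q j0) (q (2*j) * q (2*j+1)) = (if j = i0 then 1 else 0)" .
        qed
        also have "\<dots> = (if i0 \<in> T then 1 else 0)" using fT by (simp add: sum.delta)
        finally show ?thesis .
      qed
      have "multiplicity (q j0) (N1 * N2) = 1"
        using m1 m2 prime_elem_multiplicity_mult_distrib[of "q j0" N1 N2] pj0 N10 N20 by auto
      moreover have "multiplicity (q j0) (N1 * N2) = 2 * multiplicity (q j0) k"
      proof -
        have "k \<noteq> 0"
        proof
          assume "k = 0"
          then have "N1 * N2 = 0" using k by simp
          then show False using N10 N20 by simp
        qed
        then show ?thesis unfolding k using pj0 by (simp add: prime_elem_multiplicity_power_distrib)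
      qed
      ultimately show False by presburger
    qed
  qed
qed


end
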